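(* Let examples $(\vec x_1,y_1),(\vec x_2,y_2),\dots$ be drawn i.i.d. from a fixed (stationary) distribution $P$ over labelled examples with nominal attributes $X_1,\dots,X_m$, and run the Hoeffding Anytime Tree (HATT), as defined in the context, with a fixed $\delta\in(0,1)$. Assume each attribute $X_i$ has a finite, constant information gain $G(X_i)^\infty$ at the root under $P$, and that no two attributes have identical information gain. Let $X_R^{HATT,t}$ be the split attribute at the root of HATT after $t$ examples and $X_R^{DT_*}$ the split attribute at the root of $DT_*$. Then $P(X_R^{HATT,t}=X_R^{DT_*})\to 1$ as $t\to\infty$.
   Context: $DT_*$ denotes the asymptotic batch decision tree, i.e. the tree a batch learner would build from an infinite dataset drawn from $P$: at each node it splits on the attribute with highest information gain $G(\cdot)^\infty$ computed under the distribution $P$ conditioned on reaching that node. Each HATT node keeps counts $n_{ijk}$ of examples with value $x_{ij}$ of attribute $X_i$ and class $y_k$ among the examples that have reached it; from these one computes the estimated information gain $\overline G(X_i)$. A null split $X_\emptyset$ denotes not splitting; $\overline G(X_\emptyset)$ is the merit of predicting the most frequent class at the node. With $n$ the number of examples seen at a node and $R$ the range of $G$, $\epsilon=\sqrt{R^2\ln(1/\delta)/(2n)}$. HATT: each example is sorted to a leaf and the counts of every node on the path from the root to that leaf are updated. At the leaf: if not all examples there have the same class, let $X_a$ be the non-null attribute with highest $\overline G$; if $\overline G(X_a)-\overline G(X_\emptyset)>\epsilon$, replace the leaf by an internal node splitting on $X_a$ with fresh leaves as children (attribute set excluding $X_a$, counts zero). At each internal node on the path with current split attribute $X_{current}$: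 let $X_a$ be the attribute with highest $\overline G$ (including $X_\emptyset$); if $\overline G(X_a)-\overline G(X_{current})>\epsilon$, then if $X_a=X_\emptyset$ the node is replaced by a leaf (its subtree discarded), and otherwise, if $X_a\ne X_{current}$, it is replaced by an internal node splitting on $X_a$ with fresh leaves as children. *)

theory Defs
  imports "HOL-Probability.Probability"
begin

type_synonym ('a, 'v, 'c) example = "('a \<Rightarrow> 'v) \<times> 'c"

definition cent :: "('c::finite \<Rightarrow> real) \<Rightarrow> real" where
  "cent w = (let N = (\<Sum>k\<in>UNIV. w k) in
     - (\<Sum>k\<in>UNIV. if w k = 0 then 0 else (w k / N) * log 2 (w k / N)))"

definition igain :: "(('a::finite, 'v::finite, 'c::finite) example set \<Rightarrow> real) \<Rightarrow> 'a \<Rightarrow> real" where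
  "igain mu i = cent (\<lambda>k. mu {e. snd e = k})
     - (\<Sum>v\<in>UNIV. (mu {e. fst e i = v} / mu UNIV) * cent (\<lambda>k. mu {e. fst e i = v \<and> snd e = k}))"

definition Ginf :: "('a::finite, 'v::finite, 'c::finite) example pmf \<Rightarrow> 'a \<Rightarrow> real" where
  "Ginf P i = igain (measure_pmf.prob P) i"

definition dt_root :: "('a::finite, 'v::finite, 'c::finite) example pmf \<Rightarrow> 'a" where
  "dt_root P = (ARG_MAX (Ginf P) a. True)"

definition Gbar :: "('a::finite, 'v::finite, 'c::finite) example list \<Rightarrow> 'a \<Rightarrow> real" where
  "Gbar S i = igain (\<lambda>A. real (length (filter (\<lambda>e. e \<in> A) S))) i"

text \<open>Estimated merit of the null split (not splitting): information gain 0.\<close>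
definition Gbar_opt :: "('a::finite, 'v::finite, 'c::finite) example list \<Rightarrow> 'a option \<Rightarrow> real" where
  "Gbar_opt S a = (case a of None \<Rightarrow> 0 | Some i \<Rightarrow> Gbar S i)"

definition Rng :: "'c::finite itself \<Rightarrow> real" where
  "Rng _ = log 2 (real CARD('c))"

definition hoeff_eps :: "'c::finite itself \<Rightarrow> real \<Rightarrow> nat \<Rightarrow> real" where
  "hoeff_eps c \<delta> n = sqrt ((Rng c)\<^sup>2 * ln (1 / \<delta>) / (2 * real n))"

text \<open>HATT trees: every node keeps its attribute set and the examples that reached it
  (from which the counts n_ijk are computed).\<close>
datatype ('a, 'v, 'c) htree =
    Leaf "'a set" "('a, 'v, 'c) example list"
  | Node 'a "'a set" "('a, 'v, 'c) example list" "'v \<Rightarrow> ('a, 'v, 'c) htree"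

definition leaf_upd :: "real \<Rightarrow> 'a::finite set \<Rightarrow> ('a, 'v::finite, 'c::finite) example list
    \<Rightarrow> ('a, 'v, 'c) htree" where
  "leaf_upd \<delta> A S =
    (if A \<noteq> {} \<and> (\<exists>e\<in>set S. \<exists>e'\<in>set S. snd e \<noteq> snd e') then
       (let a = (ARG_MAX (Gbar S) i. i \<in> A) in
        if Gbar S a - Gbar_opt S None > hoeff_eps TYPE('c) \<delta> (length S)
        then Node a A S (\<lambda>v. Leaf (A - {a}) [])
        else Leaf A S)
     else Leaf A S)"

definition node_upd :: "real \<Rightarrow> 'a::finite \<Rightarrow> 'a set \<Rightarrow> ('a, 'v::finite, 'c::finite) example list
    \<Rightarrow> ('v \<Rightarrow> ('a, 'v, 'c) htree) \<Rightarrow> ('a, 'v, 'c) htree" where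
  "node_upd \<delta> c A S ch =
    (let a = (ARG_MAX (Gbar_opt S) b. b \<in> insert None (Some ` A)) in
     if Gbar_opt S a - Gbar_opt S (Some c) > hoeff_eps TYPE('c) \<delta> (length S) then
       (case a of None \<Rightarrow> Leaf A S
        | Some b \<Rightarrow> (if b \<noteq> c then Node b A S (\<lambda>v. Leaf (A - {b}) []) else Node c A S ch))
     else Node c A S ch)"

text \<open>The boolean flag says whether the node lies on the example's path (nodes off the path
  are left unchanged).\<close>
primrec hstep_on :: "real \<Rightarrow> ('a::finite, 'v::finite, 'c::finite) example \<Rightarrow> ('a, 'v, 'c) htree
    \<Rightarrow> bool \<Rightarrow> ('a, 'v, 'c) htree" where
  "hstep_on \<delta> e (Leaf A S) b = (if b then leaf_upd \<delta> A (S @ [e]) else Leaf A S)"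
| "hstep_on \<delta> e (Node c A S ch) b =
     (if b then node_upd \<delta> c A (S @ [e]) (\<lambda>v. hstep_on \<delta> e (ch v) (v = fst e c))
      else Node c A S ch)"

definition hstep :: "real \<Rightarrow> ('a::finite, 'v::finite, 'c::finite) example \<Rightarrow> ('a, 'v, 'c) htree
    \<Rightarrow> ('a, 'v, 'c) htree" where
  "hstep \<delta> e T = hstep_on \<delta> e T True"

definition hatt :: "real \<Rightarrow> (nat \<Rightarrow> ('a::finite, 'v::finite, 'c::finite) example) \<Rightarrow> nat
    \<Rightarrow> ('a, 'v, 'c) htree" where
  "hatt \<delta> \<omega> t = fold (hstep \<delta>) (map \<omega> [0..<t]) (Leaf UNIV [])"

text \<open>Split attribute at the root (None if the root is a leaf, i.e. the null split).\<close>
fun root_attr :: "('a, 'v, 'c) htree \<Rightarrow> 'a option" where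
  "root_attr (Leaf _ _) = None"
| "root_attr (Node c _ _ _) = Some c"

end

theory Submission
  imports Defs "HOL-Real_Asymp.Real_Asymp"
begin

definition gg :: "real \<Rightarrow> real" where "gg x = x * log 2 x"

lemma gg0: "((\<lambda>x::real. x * ln x) \<longlongrightarrow> 0) (at_right 0)" by real_asymp
lemma gg0': "((\<lambda>x::real. x * ln x) \<longlongrightarrow> 0) (at_left 0)"
proof -
  have "((\<lambda>x::real. - (x * ln x)) \<longlongrightarrow> 0) (at_right 0)" by real_asymp
  then show ?thesis unfolding filterlim_at_left_to_right[of _ _ 0] by (simp add: ln_minus)
qed

lemma isCont_gg: "isCont gg x"
proof (cases "x = 0")
  case False
  then show ?thesis unfolding gg_def log_def
    by (intro continuous_intros) auto
next
  case True
  have "((\<lambda>x::real. x * ln x) \<longlongrightarrow> 0) (at 0)"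
    using gg0 gg0' by (simp add: filterlim_split_at)
  then have "((\<lambda>x::real. x * ln x / ln 2) \<longlongrightarrow> 0) (at 0)"
    by (auto intro: tendsto_eq_intros)
  then show ?thesis using True unfolding isCont_def gg_def log_def by (simp add: mult.commute)
qed

lemma lim_test: fixes c :: real assumes "c > 0" shows "(\<lambda>t. 1 - C * exp (- 2 * real t * c)) \<longlonglongrightarrow> 1"
  using assms by real_asymp

lemma lim_test2: fixes c :: real assumes "c > 0" shows "(\<lambda>t. sqrt (c / (2 * real t))) \<longlonglongrightarrow> 0"
  using assms by real_asymp

lemma gg_0[simp]: "gg 0 = 0" by (simp add: gg_def)
lemma gg_1[simp]: "gg 1 = 0" by (simp add: gg_def)

lemma cent_eq:
  fixes w :: "'c::finite \<Rightarrow> real"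
  assumes nn: "\<And>k. w k \<ge> 0"
  shows "(\<Sum>k\<in>UNIV. w k) * cent w = - (\<Sum>k\<in>UNIV. gg (w k)) + gg (\<Sum>k\<in>UNIV. w k)"
proof (cases "(\<Sum>k\<in>UNIV. w k) = 0")
  case True
  then have "\<forall>k. w k = 0" using sum_nonneg_eq_0_iff[of UNIV w] nn by auto
  then show ?thesis by (simp add: cent_def)
next
  case False
  define N where "N = (\<Sum>k\<in>UNIV. w k)"
  have Npos: "N > 0" using False nn unfolding N_def by (metis order_less_le sum_nonneg)
  have trm: "N * (if w k = 0 then 0 else (w k / N) * log 2 (w k / N)) = gg (w k) - w k * log 2 N" for k
  proof (cases "w k = 0")
    case False
    then have "w k > 0" using nn[of k] by auto
    then show ?thesis using Npos by (simp add: gg_def log_divide algebra_simps)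
  qed (simp add: gg_def)
  have "N * cent w = - (\<Sum>k\<in>UNIV. N * (if w k = 0 then 0 else (w k / N) * log 2 (w k / N)))"
    by (simp add: cent_def Let_def N_def[symmetric] sum_distrib_left)
  also have "\<dots> = - (\<Sum>k\<in>UNIV. gg (w k) - w k * log 2 N)" using trm by simp
  also have "\<dots> = - (\<Sum>k\<in>UNIV. gg (w k)) + N * log 2 N"
    by (simp add: sum_subtractf sum_distrib_right[symmetric] N_def)
  finally show ?thesis by (simp add: N_def gg_def)
qed

lemma cent_nonneg:
  fixes w :: "'c::finite \<Rightarrow> real"
  assumes nn: "\<And>k. w k \<ge> 0"
  shows "cent w \<ge> 0"
proof -
  define N where "N = (\<Sum>k\<in>UNIV. w k)"
  have "(if w k = 0 then 0 else (w k / N) * log 2 (w k / N)) \<le> 0" for k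
  proof (cases "w k = 0")
    case False
    then have wk: "w k > 0" using nn[of k] by auto
    have "w k \<le> N" unfolding N_def using nn by (intro member_le_sum) auto
    then have "w k / N \<le> 1" "w k / N > 0" using wk by auto
    then have "log 2 (w k / N) \<le> 0" by simp
    then have "(w k / N) * log 2 (w k / N) \<le> 0"
      using \<open>w k / N > 0\<close> by (intro mult_nonneg_nonpos) auto
    then show ?thesis using False by simp
  qed simp
  then show ?thesis by (simp add: cent_def Let_def N_def[symmetric] sum_nonpos)
qed

definition Psi :: "(('a::finite, 'v::finite, 'c::finite) example \<Rightarrow> real) \<Rightarrow> 'a \<Rightarrow> real" where
  "Psi q i = (- (\<Sum>k\<in>UNIV. gg (sum q {e. snd e = k})) + gg (\<Sum>k\<in>UNIV. sum q {e. snd e = k}))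
     - (\<Sum>v\<in>UNIV. - (\<Sum>k\<in>UNIV. gg (sum q {e. fst e i = v \<and> snd e = k}))
                   + gg (\<Sum>k\<in>UNIV. sum q {e. fst e i = v \<and> snd e = k}))"

lemma igain_sum:
  fixes q :: "('a::finite, 'v::finite, 'c::finite) example \<Rightarrow> real"
  assumes nn: "\<And>x. q x \<ge> 0" and s1: "sum q UNIV = 1"
  shows "igain (\<lambda>A. sum q A) i = Psi q i"
proof -
  have cls: "(\<Sum>k\<in>UNIV. sum q {e. snd e = k}) = 1"
    using sum.group[of UNIV UNIV snd q] s1 by simp
  have part: "sum q {e. fst e i = v} = (\<Sum>k\<in>UNIV. sum q {e. fst e i = v \<and> snd e = k})" for v
    using sum.group[of "{e. fst e i = v}" UNIV snd q] by simp
  have c1: "cent (\<lambda>k. sum q {e. snd e = k}) = - (\<Sum>k\<in>UNIV. gg (sum q {e. snd e = k})) + gg (\<Sum>k\<in>UNIV. sum q {e. snd e = k})"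
    using cent_eq[of "\<lambda>k. sum q {e. snd e = k}"] cls nn by (simp add: sum_nonneg)
  have c2: "sum q {e. fst e i = v} * cent (\<lambda>k. sum q {e. fst e i = v \<and> snd e = k}) =
     - (\<Sum>k\<in>UNIV. gg (sum q {e. fst e i = v \<and> snd e = k})) + gg (\<Sum>k\<in>UNIV. sum q {e. fst e i = v \<and> snd e = k})" for v
    unfolding part using cent_eq[of "\<lambda>k. sum q {e. fst e i = v \<and> snd e = k}"] nn by (simp add: sum_nonneg)
  show ?thesis unfolding igain_def Psi_def using c1 c2 s1 by simp
qed

lemma Psi_cont:
  fixes p :: "('a::finite, 'v::finite, 'c::finite) example \<Rightarrow> real"
  assumes "\<epsilon> > 0"
  shows "\<exists>\<eta>>0. \<forall>q. (\<forall>x. \<bar>q x - p x\<bar> < \<eta>) \<longrightarrow> \<bar>Psi q i - Psi p i\<bar> < \<epsilon>"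
proof (rule ccontr)
  assume "\<not> ?thesis"
  then have "\<forall>n. \<exists>q. (\<forall>x. \<bar>q x - p x\<bar> < 1 / (real n + 1)) \<and> \<not> \<bar>Psi q i - Psi p i\<bar> < \<epsilon>"
    by (metis divide_pos_pos of_nat_0_le_iff zero_less_one add_pos_nonneg add.commute)
  then obtain Q where Q: "\<And>n x. \<bar>Q n x - p x\<bar> < 1 / (real n + 1)" "\<And>n. \<not> \<bar>Psi (Q n) i - Psi p i\<bar> < \<epsilon>"
    by metis
  have lim: "(\<lambda>n. Q n x) \<longlonglongrightarrow> p x" for x
  proof -
    have "(\<lambda>n. Q n x - p x) \<longlonglongrightarrow> 0"
    proof (rule Lim_null_comparison)
      show "\<forall>\<^sub>F n in sequentially. norm (Q n x - p x) \<le> 1 / (real n + 1)"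
        using Q(1)[of _ x] by (intro always_eventually allI) (simp add: less_imp_le)
      show "(\<lambda>n. 1 / (real n + 1)) \<longlonglongrightarrow> 0" by real_asymp
    qed
    then show ?thesis by (simp add: LIM_zero_iff)
  qed
  have "(\<lambda>n. Psi (Q n) i) \<longlonglongrightarrow> Psi p i"
    unfolding Psi_def
    by (intro tendsto_intros isCont_tendsto_compose[OF isCont_gg] lim)
  then have "\<forall>\<^sub>F n in sequentially. \<bar>Psi (Q n) i - Psi p i\<bar> < \<epsilon>"
    using assms by (simp add: tendsto_iff dist_real_def)
  then show False using Q(2) by (simp add: eventually_sequentially)
qed

lemma cnt_sum: "real (length (filter (\<lambda>e. e \<in> A) S)) = sum (\<lambda>x. real (count_list S x)) A"
  for S :: "'e::finite list"
proof (induction S)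
  case (Cons a S)
  have "sum (\<lambda>x. real (count_list (a # S) x)) A = sum (\<lambda>x. real (count_list S x)) A + sum (\<lambda>x. if a = x then 1 else 0) A"
  proof -
    have "real (count_list (a # S) x) = real (count_list S x) + (if a = x then 1 else 0)" for x by simp
    then show ?thesis by (simp add: sum.distrib)
  qed
  also have "sum (\<lambda>x. if a = x then 1 else 0) A = (if a \<in> A then 1 else 0 :: real)"
    by (simp add: sum.delta)
  finally show ?case using Cons by simp
qed simp

lemma cent_scale:
  fixes w :: "'c::finite \<Rightarrow> real"
  assumes "c > 0"
  shows "cent (\<lambda>k. c * w k) = cent w"
proof -
  have eq: "\<And>k. c * w k / (c * sum w UNIV) = w k / sum w UNIV"
    using assms by simp
  show ?thesis unfolding cent_def Let_def sum_distrib_left[symmetric] eq using assms by simp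
qed

lemma igain_scale:
  fixes mu :: "('a::finite, 'v::finite, 'c::finite) example set \<Rightarrow> real"
  assumes "c > 0"
  shows "igain (\<lambda>A. c * mu A) i = igain mu i"
  using assms by (simp add: igain_def cent_scale)

definition freq :: "('a::finite, 'v::finite, 'c::finite) example list \<Rightarrow> ('a, 'v, 'c) example \<Rightarrow> real" where
  "freq S x = real (count_list S x) / real (length S)"

lemma Gbar_Psi:
  fixes S :: "('a::finite, 'v::finite, 'c::finite) example list"
  assumes "S \<noteq> []"
  shows "Gbar S i = Psi (freq S) i"
proof -
  define n where "n = real (length S)"
  have n: "n > 0" using assms by (simp add: n_def)
  have "(\<lambda>A. real (length (filter (\<lambda>e. e \<in> A) S))) = (\<lambda>A. n * sum (freq S) A)"
    using n by (simp add: cnt_sum freq_def sum_distrib_left n_def)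
  then have "Gbar S i = igain (\<lambda>A. sum (freq S) A) i"
    unfolding Gbar_def using igain_scale[OF n] by simp
  also have "\<dots> = Psi (freq S) i"
  proof (rule igain_sum)
    show "0 \<le> freq S x" for x by (simp add: freq_def)
    have "sum (\<lambda>x. real (count_list S x)) UNIV = n"
      using cnt_sum[of UNIV S] by (simp add: n_def)
    then show "sum (freq S) UNIV = 1" using n
      by (simp add: freq_def sum_divide_distrib[symmetric] n_def)
  qed
  finally show ?thesis .
qed

lemma cent_single:
  fixes a :: real
  shows "cent (\<lambda>k. if k = k0 then a else 0) = 0"
proof -
  have "(if (if k = k0 then a else 0) = 0 then 0 else ((if k = k0 then a else 0) / a) * log 2 ((if k = k0 then a else 0) / a)) = 0" for k
    by auto
  then show ?thesis by (simp add: cent_def Let_def sum.delta')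
qed

lemma Gbar_single:
  fixes S :: "('a::finite, 'v::finite, 'c::finite) example list"
  assumes "\<forall>e\<in>set S. snd e = k0"
  shows "Gbar S i \<le> 0"
proof -
  have cls: "(\<lambda>k. real (length (filter (\<lambda>e. e \<in> {e. snd e = k}) S))) = (\<lambda>k. if k = k0 then real (length S) else 0)"
  proof
    fix k
    show "real (length (filter (\<lambda>e. e \<in> {e. snd e = k}) S)) = (if k = k0 then real (length S) else 0)"
      using assms by (auto simp: filter_empty_conv)
  qed
  have "0 \<le> (\<Sum>v\<in>UNIV. (real (length (filter (\<lambda>e. e \<in> {e. fst e i = v}) S)) / real (length (filter (\<lambda>e. e \<in> UNIV) S))) *
       cent (\<lambda>k. real (length (filter (\<lambda>e. e \<in> {e. fst e i = v \<and> snd e = k}) S))))"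
    by (intro sum_nonneg mult_nonneg_nonneg cent_nonneg) auto
  then show ?thesis unfolding Gbar_def igain_def cls cent_single by linarith
qed

fun rS :: "('a, 'v, 'c) htree \<Rightarrow> ('a, 'v, 'c) example list" where
  "rS (Leaf _ S) = S" | "rS (Node _ _ S _) = S"
fun rA :: "('a, 'v, 'c) htree \<Rightarrow> 'a set" where
  "rA (Leaf A _) = A" | "rA (Node _ A _ _) = A"

lemma leaf_upd_root: "rS (leaf_upd \<delta> A S) = S \<and> rA (leaf_upd \<delta> A S) = A"
  by (simp add: leaf_upd_def Let_def)

lemma node_upd_root: "rS (node_upd \<delta> c A S ch) = S \<and> rA (node_upd \<delta> c A S ch) = A"
  by (simp add: node_upd_def Let_def split: option.split)

lemma hstep_root: "rS (hstep \<delta> e T) = rS T @ [e] \<and> rA (hstep \<delta> e T) = rA T"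
  by (cases T) (simp_all add: hstep_def leaf_upd_root node_upd_root)

lemma hatt_Suc: "hatt \<delta> \<omega> (Suc t) = hstep \<delta> (\<omega> t) (hatt \<delta> \<omega> t)"
  by (simp add: hatt_def)

lemma hatt_root: "rS (hatt \<delta> \<omega> t) = map \<omega> [0..<t] \<and> rA (hatt \<delta> \<omega> t) = UNIV"
  by (induction t) (simp_all add: hatt_Suc hstep_root, simp add: hatt_def)

lemma arg_max_unique:
  assumes "P d" "\<And>y. P y \<Longrightarrow> y \<noteq> d \<Longrightarrow> f y < (f d :: real)"
  shows "arg_max f P = d"
  unfolding arg_max_def
proof (rule someI2[of _ d])
  show "is_arg_max f P d" unfolding is_arg_max_def
  proof (intro conjI notI)
    show "P d" by fact
    assume "\<exists>y. P y \<and> f d < f y"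
    then obtain y where "P y" "f d < f y" by blast
    then show False using assms(2)[of y] by (cases "y = d") auto
  qed
  fix x assume "is_arg_max f P x"
  then show "x = d" using assms by (auto simp: is_arg_max_def)
qed

definition Good :: "real \<Rightarrow> 'a \<Rightarrow> ('a::finite, 'v::finite, 'c::finite) example list \<Rightarrow> bool" where
  "Good \<delta> d S \<longleftrightarrow> (\<forall>i. i \<noteq> d \<longrightarrow> Gbar S i + hoeff_eps TYPE('c) \<delta> (length S) < Gbar S d)
     \<and> hoeff_eps TYPE('c) \<delta> (length S) < Gbar S d"

lemma eps_nonneg: "0 < \<delta> \<Longrightarrow> \<delta> < 1 \<Longrightarrow> hoeff_eps TYPE('c::finite) \<delta> n \<ge> 0"
  by (simp add: hoeff_eps_def)

lemma step_good:
  fixes T :: "('a::finite, 'v::finite, 'c::finite) htree"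
  assumes G: "Good \<delta> d (rS T @ [e])" and A: "rA T = UNIV" and dl: "0 < \<delta>" "\<delta> < 1"
  shows "root_attr (hstep \<delta> e T) = Some d"
proof -
  define S' where "S' = rS T @ [e]"
  define ep where "ep = hoeff_eps TYPE('c) \<delta> (length S')"
  have G1: "\<And>i. i \<noteq> d \<Longrightarrow> Gbar S' i + ep < Gbar S' d" and G2: "ep < Gbar S' d"
    using G unfolding Good_def S'_def ep_def by auto
  have ep0: "ep \<ge> 0" unfolding ep_def using dl by (rule eps_nonneg)
  have G1': "Gbar S' i < Gbar S' d" if "i \<noteq> d" for i using G1[OF that] ep0 by linarith
  have am1: "arg_max (Gbar S') (\<lambda>i. i \<in> UNIV) = d"
    by (rule arg_max_unique) (use G1' in auto)
  have am2: "arg_max (Gbar_opt S') (\<lambda>b. b \<in> insert None (Some ` UNIV)) = Some d"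
  proof (rule arg_max_unique)
    fix y assume "y \<in> insert None (Some ` UNIV)" "y \<noteq> Some d"
    then show "Gbar_opt S' y < Gbar_opt S' (Some d)"
      using G1' G2 ep0 by (cases y) (auto simp: Gbar_opt_def)
  qed simp
  have two: "\<exists>e\<in>set S'. \<exists>e'\<in>set S'. snd e \<noteq> snd e'"
  proof (rule ccontr)
    assume n: "\<not> (\<exists>e\<in>set S'. \<exists>e'\<in>set S'. snd e \<noteq> snd e')"
    have "e \<in> set S'" by (simp add: S'_def)
    then have "\<forall>x\<in>set S'. snd x = snd e" using n by blast
    then have "Gbar S' d \<le> 0" by (rule Gbar_single)
    then show False using G2 ep0 by linarith
  qed
  show ?thesis
  proof (cases T)
    case (Leaf A0 S0)
    then have h: "hstep \<delta> e T = leaf_upd \<delta> UNIV S'" using A by (simp add: hstep_def S'_def)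
    have "leaf_upd \<delta> UNIV S' = Node d UNIV S' (\<lambda>v. Leaf (UNIV - {d}) [])"
      unfolding leaf_upd_def Let_def am1 using two G2 by (simp add: Gbar_opt_def ep_def)
    then show ?thesis using h by simp
  next
    case (Node c A0 S0 ch)
    then obtain ch' where h: "hstep \<delta> e T = node_upd \<delta> c UNIV S' ch'" using A by (simp add: hstep_def S'_def)
    show ?thesis
    proof (cases "c = d")
      case True
      then show ?thesis unfolding h node_upd_def Let_def am2 by simp
    next
      case False
      then have "Gbar_opt S' (Some d) - Gbar_opt S' (Some c) > ep" using G1[OF False] by (simp add: Gbar_opt_def)
      then show ?thesis unfolding h node_upd_def Let_def am2 using False by (simp add: ep_def)
    qed
  qed
qed

lemma hatt_good:
  fixes \<omega> :: "nat \<Rightarrow> ('a::finite, 'v::finite, 'c::finite) example"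
  assumes "Good \<delta> d (map \<omega> [0..<Suc t])" "0 < \<delta>" "\<delta> < 1"
  shows "root_attr (hatt \<delta> \<omega> (Suc t)) = Some d"
  unfolding hatt_Suc using hatt_root[of \<delta> \<omega> t] assms
  by (intro step_good) auto

lemma pps: "product_prob_space (\<lambda>_::nat. measure_pmf P)"
  unfolding product_prob_space_def product_prob_space_axioms_def product_sigma_finite_def
  by (auto intro: measure_pmf.prob_space_axioms measure_pmf.sigma_finite_measure_axioms)

lemma space_M: "space (PiM UNIV (\<lambda>_::nat. measure_pmf P)) = UNIV"
  by (simp add: space_PiM)

lemma eqtest:
  fixes P :: "'e::countable pmf" and xs :: "'e list"
  shows "(\<lambda>\<omega>. map \<omega> [0..<t]) -` {xs} \<inter> space (PiM UNIV (\<lambda>_::nat. measure_pmf P)) =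
       (if length xs = t then {\<omega>\<in>space (PiM UNIV (\<lambda>_::nat. measure_pmf P)). \<forall>j\<in>{..<t}. \<omega> j = xs ! j} else {})"
proof -
  have "map \<omega> [0..<t] = xs \<longleftrightarrow> length xs = t \<and> (\<forall>j\<in>{..<t}. \<omega> j = xs ! j)" for \<omega>
    by (auto simp: list_eq_iff_nth_eq)
  then show ?thesis by (auto simp: space_M)
qed

lemma coll:
  fixes P :: "'e::countable pmf" and xs :: "'e list"
  shows "{\<omega>\<in>space (PiM UNIV (\<lambda>_::nat. measure_pmf P)). \<forall>j\<in>{..<t}. \<omega> j = xs ! j} \<in> sets (PiM UNIV (\<lambda>_::nat. measure_pmf P))"
proof (rule sets.sets_Collect_finite_All)
  fix j :: nat
  have "(\<lambda>\<omega>. \<omega> j) -` {xs ! j} \<inter> space (PiM UNIV (\<lambda>_::nat. measure_pmf P)) \<in> sets (PiM UNIV (\<lambda>_::nat. measure_pmf P))"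
    by (rule measurable_sets[OF measurable_component_singleton]) auto
  then show "{\<omega>\<in>space (PiM UNIV (\<lambda>_::nat. measure_pmf P)). \<omega> j = xs ! j} \<in> sets (PiM UNIV (\<lambda>_::nat. measure_pmf P))"
    by (simp add: vimage_def Int_def conj_commute)
qed simp

lemma meas_map:
  fixes P :: "'e::countable pmf"
  shows "(\<lambda>\<omega>. map \<omega> [0..<t]) \<in> PiM UNIV (\<lambda>_::nat. measure_pmf P) \<rightarrow>\<^sub>M count_space UNIV"
  unfolding measurable_count_space_eq2_countable
proof (intro conjI ballI)
  fix xs :: "'e list"
  show "(\<lambda>\<omega>. map \<omega> [0..<t]) -` {xs} \<inter> space (PiM UNIV (\<lambda>_::nat. measure_pmf P)) \<in> sets (PiM UNIV (\<lambda>_::nat. measure_pmf P))"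
    unfolding eqtest using coll[of P t xs] by simp
qed simp

lemma meas_list:
  fixes P :: "'e::countable pmf"
  shows "{\<omega>. Q (map \<omega> [0..<t])} \<in> sets (PiM UNIV (\<lambda>_::nat. measure_pmf P))"
proof -
  have "(\<lambda>\<omega>. map \<omega> [0..<t]) -` {xs. Q xs} \<inter> space (PiM UNIV (\<lambda>_::nat. measure_pmf P)) \<in> sets (PiM UNIV (\<lambda>_::nat. measure_pmf P))"
    by (rule measurable_sets[OF meas_map]) simp
  then show ?thesis by (simp add: space_M vimage_def)
qed

lemma count_sum: "real (count_list (map \<omega> [0..<t]) x) = (\<Sum>j\<in>{0..<t}. indicator {x} (\<omega> j) :: real)"
  by (induction t) (auto simp: indicator_def)

lemma hoeff:
  fixes P :: "'e::countable pmf"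
  assumes t: "t > 0" and eta: "\<eta> \<ge> 0"
  shows "measure (PiM UNIV (\<lambda>_::nat. measure_pmf P))
     {\<omega>. \<eta> \<le> \<bar>real (count_list (map \<omega> [0..<t]) x) / real t - pmf P x\<bar>} \<le> 2 * exp (-2 * real t * \<eta>\<^sup>2)"
proof -
  let ?M = "PiM UNIV (\<lambda>_::nat. measure_pmf P)"
  let ?I = "{0..<t}"
  interpret PP: product_prob_space "\<lambda>_::nat. measure_pmf P" UNIV by (rule pps)
  have Mps: "prob_space ?M" by (rule prob_space_PiM) (rule measure_pmf.prob_space_axioms)
  have I: "?I \<noteq> {}" using t by auto
  have ind0: "prob_space.indep_vars ?M (\<lambda>_. measure_pmf P) (\<lambda>j \<omega>. \<omega> j) ?I"
  proof (subst prob_space.indep_vars_iff_distr_eq_PiM'[OF Mps I])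
    show "(\<lambda>\<omega>. \<omega> i) \<in> measurable ?M (measure_pmf P)" for i
      by (rule measurable_component_singleton) simp
    have "distr ?M (PiM ?I (\<lambda>_. measure_pmf P)) (\<lambda>\<omega>. \<lambda>i\<in>?I. \<omega> i) = PiM ?I (\<lambda>_. measure_pmf P)"
      using PP.distr_PiM_restrict_finite[of ?I] by simp
    also have "\<dots> = PiM ?I (\<lambda>i. distr ?M (measure_pmf P) (\<lambda>\<omega>. \<omega> i))"
      using PP.PiM_component[of _] by simp
    finally show "distr ?M (PiM ?I (\<lambda>_. measure_pmf P)) (\<lambda>\<omega>. \<lambda>i\<in>?I. \<omega> i) = PiM ?I (\<lambda>i. distr ?M (measure_pmf P) (\<lambda>\<omega>. \<omega> i))" .
  qed
  have ind: "prob_space.indep_vars ?M (\<lambda>_. borel) (\<lambda>j \<omega>. indicator {x} (\<omega> j) :: real) ?I"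
    using prob_space.indep_vars_compose2[OF Mps ind0, of "\<lambda>_. indicator {x}" "\<lambda>_. borel"] by simp
  have distr_eq: "distr ?M borel (\<lambda>\<omega>. indicator {x} (\<omega> j) :: real) = distr (measure_pmf P) borel (indicator {x})" for j
  proof -
    have "distr ?M borel (\<lambda>\<omega>. indicator {x} (\<omega> j) :: real) = distr (distr ?M (measure_pmf P) (\<lambda>\<omega>. \<omega> j)) borel (indicator {x})"
      by (subst distr_distr) (auto simp: comp_def)
    also have "\<dots> = distr (measure_pmf P) borel (indicator {x})"
      using PP.PiM_component[of j] by simp
    finally show ?thesis .
  qed
  have mu: "integral\<^sup>L ?M (\<lambda>\<omega>. indicator {x} (\<omega> 0) :: real) = pmf P x"
  proof -
    have "integral\<^sup>L ?M (\<lambda>\<omega>. indicator {x} (\<omega> 0) :: real) = integral\<^sup>L (distr ?M (measure_pmf P) (\<lambda>\<omega>. \<omega> 0)) (indicator {x})"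
      by (subst integral_distr) auto
    also have "\<dots> = pmf P x" using PP.PiM_component[of 0] by (simp add: measure_pmf_single)
    finally show ?thesis .
  qed
  interpret H: Hoeffding_ineq_iid ?M ?I "\<lambda>j \<omega>. indicator {x} (\<omega> j) :: real" "\<lambda>\<omega>. indicator {x} (\<omega> 0)" 0 1 "pmf P x"
  proof unfold_locales
    show "pmf P x \<equiv> integral\<^sup>L ?M (\<lambda>\<omega>. indicator {x} (\<omega> 0) :: real)" using mu by simp
    show "finite ?I" by simp
    show "prob_space.indep_vars ?M (\<lambda>_. borel) (\<lambda>j \<omega>. indicator {x} (\<omega> j) :: real) ?I" by (rule ind)
    show "distr ?M borel (\<lambda>\<omega>. indicator {x} (\<omega> i) :: real) = distr ?M borel (\<lambda>\<omega>. indicator {x} (\<omega> 0))" for i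
      by (simp add: distr_eq)
    show "(\<lambda>\<omega>. indicator {x} (\<omega> 0) :: real) \<in> measurable ?M borel"
      by (rule measurable_compose[OF measurable_component_singleton]) auto
    show "AE \<omega> in ?M. indicator {x} (\<omega> 0) \<in> {0..1::real}" by (simp add: indicator_def)
  qed
  have "measure ?M {\<omega>\<in>space ?M. \<bar>(\<Sum>j\<in>?I. indicator {x} (\<omega> j)) / real (card ?I) - pmf P x\<bar> \<ge> \<eta>}
      \<le> 2 * exp (-2 * real (card ?I) * \<eta>\<^sup>2 / (1 - 0)\<^sup>2)"
    by (rule H.Hoeffding_ineq_abs_ge'[OF eta]) (use I in auto)
  then show ?thesis by (simp add: mu count_sum space_M)
qed

lemma dt_root_max:
  fixes P :: "('a::finite, 'v::finite, 'c::finite) example pmf"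
  assumes dist: "\<And>i j. i \<noteq> j \<Longrightarrow> Ginf P i \<noteq> Ginf P j"
  shows "i \<noteq> dt_root P \<Longrightarrow> Ginf P i < Ginf P (dt_root P)"
proof -
  assume ne: "i \<noteq> dt_root P"
  have "Max (range (Ginf P)) \<in> range (Ginf P)" by (rule Max_in) auto
  then obtain d0 where d0: "Ginf P d0 = Max (range (Ginf P))" by (metis imageE)
  have "is_arg_max (Ginf P) (\<lambda>a. True) d0"
    unfolding is_arg_max_def using d0 by (auto simp: not_less)
  then have "is_arg_max (Ginf P) (\<lambda>a. True) (dt_root P)"
    unfolding dt_root_def arg_max_def by (rule someI)
  then have "Ginf P i \<le> Ginf P (dt_root P)" unfolding is_arg_max_def by (auto simp: not_less)
  moreover have "Ginf P i \<noteq> Ginf P (dt_root P)" using dist ne by blast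
  ultimately show ?thesis by linarith
qed

lemma Ginf_Psi:
  fixes P :: "('a::finite, 'v::finite, 'c::finite) example pmf"
  shows "Ginf P i = Psi (pmf P) i"
proof -
  have "(\<lambda>A. measure_pmf.prob P A) = (\<lambda>A. sum (pmf P) A)"
    by (rule ext) (simp add: measure_measure_pmf_finite)
  then have "Ginf P i = igain (\<lambda>A. sum (pmf P) A) i" by (simp add: Ginf_def)
  also have "\<dots> = Psi (pmf P) i"
    by (rule igain_sum) (auto intro: sum_pmf_eq_1)
  finally show ?thesis .
qed

lemma eps_lim:
  assumes "0 < \<delta>" "\<delta> < 1"
  shows "(\<lambda>t. hoeff_eps TYPE('c::finite) \<delta> t) \<longlonglongrightarrow> 0"
proof -
  define c where "c = (Rng TYPE('c))\<^sup>2 * ln (1 / \<delta>)"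
  have c0: "c \<ge> 0" using assms by (simp add: c_def)
  have eq: "(\<lambda>t. hoeff_eps TYPE('c::finite) \<delta> t) = (\<lambda>t. sqrt (c / (2 * real t)))"
    by (simp add: hoeff_eps_def c_def)
  show ?thesis
  proof (cases "c = 0")
    case True
    then show ?thesis unfolding eq by simp
  next
    case False
    then show ?thesis unfolding eq using c0 lim_test2[of c] by simp
  qed
qed

theorem lemma2:
  fixes P :: "('a::finite, 'v::finite, 'c::finite) example pmf" and \<delta> :: real
  assumes "0 < \<delta>" and "\<delta> < 1"
    and "\<And>i j. i \<noteq> j \<Longrightarrow> Ginf P i \<noteq> Ginf P j"
    and "0 < Ginf P (dt_root P)"
  shows "(\<lambda>t. measure (PiM UNIV (\<lambda>_::nat. measure_pmf P))
            {\<omega>. root_attr (hatt \<delta> \<omega> t) = Some (dt_root P)}) \<longlonglongrightarrow> 1"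
proof -
  let ?M = "PiM UNIV (\<lambda>_::nat. measure_pmf P)"
  define p where "p = pmf P"
  define d where "d = dt_root P"
  have Mps: "prob_space ?M" by (rule prob_space_PiM) (rule measure_pmf.prob_space_axioms)
  have dmax: "\<And>i. i \<noteq> d \<Longrightarrow> Ginf P i < Ginf P d"
    unfolding d_def by (rule dt_root_max[OF assms(3)])
  define gap where "gap = (\<lambda>i. if i = d then Ginf P d else Ginf P d - Ginf P i)"
  define \<Delta> where "\<Delta> = Min (range gap)"
  have gpos: "gap i > 0" for i using dmax assms(4) by (auto simp: gap_def d_def)
  have \<Delta>pos: "\<Delta> > 0" unfolding \<Delta>_def using Min_in[of "range gap"] gpos by force
  have \<Delta>le: "\<Delta> \<le> gap i" for i unfolding \<Delta>_def by simp
  have "\<forall>i. \<exists>\<eta>>0. \<forall>q. (\<forall>x. \<bar>q x - p x\<bar> < \<eta>) \<longrightarrow> \<bar>Psi q i - Psi p i\<bar> < \<Delta> / 3"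
  proof
    fix i
    show "\<exists>\<eta>>0. \<forall>q. (\<forall>x. \<bar>q x - p x\<bar> < \<eta>) \<longrightarrow> \<bar>Psi q i - Psi p i\<bar> < \<Delta> / 3"
      by (rule Psi_cont) (use \<Delta>pos in simp)
  qed
  then obtain ef where ef: "\<And>i. ef i > 0" "\<And>i q. (\<forall>x. \<bar>q x - p x\<bar> < ef i) \<Longrightarrow> \<bar>Psi q i - Psi p i\<bar> < \<Delta> / 3"
    by metis
  define \<eta> where "\<eta> = Min (range ef)"
  have \<eta>pos: "\<eta> > 0" unfolding \<eta>_def using Min_in[of "range ef"] ef(1) by force
  have \<eta>le: "\<eta> \<le> ef i" for i unfolding \<eta>_def by simp
  have key: "\<bar>Psi q i - Ginf P i\<bar> < \<Delta> / 3" if "\<forall>x. \<bar>q x - p x\<bar> < \<eta>" for q i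
  proof -
    have "\<forall>x. \<bar>q x - p x\<bar> < ef i" using that \<eta>le[of i] by (meson less_le_trans)
    then have "\<bar>Psi q i - Psi p i\<bar> < \<Delta> / 3" by (rule ef(2))
    then show ?thesis by (simp add: Ginf_Psi p_def)
  qed
  have good: "Good \<delta> d (map \<omega> [0..<Suc t])"
    if e: "hoeff_eps TYPE('c) \<delta> (Suc t) < \<Delta> / 3"
      and w: "\<forall>x. \<bar>freq (map \<omega> [0..<Suc t]) x - p x\<bar> < \<eta>" for t \<omega>
  proof -
    define S where "S = map \<omega> [0..<Suc t]"
    have cl: "\<bar>Gbar S i - Ginf P i\<bar> < \<Delta> / 3" for i
      using key[of "freq S" i] w Gbar_Psi[of S i] by (simp add: S_def)
    have e': "hoeff_eps TYPE('c) \<delta> (length S) < \<Delta> / 3" using e by (simp add: S_def)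
    show ?thesis unfolding S_def[symmetric] Good_def
    proof (intro conjI allI impI)
      fix i assume "i \<noteq> d"
      then have "\<Delta> \<le> Ginf P d - Ginf P i" using \<Delta>le[of i] by (simp add: gap_def)
      then show "Gbar S i + hoeff_eps TYPE('c) \<delta> (length S) < Gbar S d"
        using cl[of i] cl[of d] e' by linarith
    next
      have "\<Delta> \<le> Ginf P d" using \<Delta>le[of d] by (simp add: gap_def)
      then show "hoeff_eps TYPE('c) \<delta> (length S) < Gbar S d" using cl[of d] e' by linarith
    qed
  qed
  define L where "L = (\<lambda>t. 1 - (2 * real CARD(('a, 'v, 'c) example)) * exp (- 2 * real t * \<eta>\<^sup>2))"
  have L: "L \<longlonglongrightarrow> 1" unfolding L_def by (rule lim_test) (use \<eta>pos in simp)
  have ev_eps: "eventually (\<lambda>t. hoeff_eps TYPE('c) \<delta> t < \<Delta> / 3) sequentially"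
    using order_tendstoD(2)[OF eps_lim[OF assms(1,2)], of "\<Delta> / 3"] \<Delta>pos by simp
  have lower: "eventually (\<lambda>t. L t \<le> measure ?M {\<omega>. root_attr (hatt \<delta> \<omega> t) = Some (dt_root P)}) sequentially"
  proof -
    have "eventually (\<lambda>t. t \<ge> 1) sequentially" by (rule eventually_ge_at_top)
    with ev_eps show ?thesis
    proof eventually_elim
      case (elim t)
      then obtain t' where t': "t = Suc t'" by (cases t) auto
      define B where "B = (\<lambda>x. {\<omega>. \<eta> \<le> \<bar>real (count_list (map \<omega> [0..<t]) x) / real t - pmf P x\<bar>})"
      define E where "E = {\<omega>. \<forall>x. \<bar>freq (map \<omega> [0..<t]) x - p x\<bar> < \<eta>}"
      have Bs: "B x \<in> sets ?M" for x unfolding B_def by (rule meas_list)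
      have Eeq: "E = space ?M - (\<Union>x. B x)"
        by (auto simp: E_def B_def space_M freq_def p_def not_le) (use leD in blast)
      have sub: "E \<subseteq> {\<omega>. root_attr (hatt \<delta> \<omega> t) = Some (dt_root P)}"
      proof
        fix \<omega> assume "\<omega> \<in> E"
        then have "Good \<delta> d (map \<omega> [0..<Suc t'])"
          using good[of t' \<omega>] elim t' by (simp add: E_def)
        then show "\<omega> \<in> {\<omega>. root_attr (hatt \<delta> \<omega> t) = Some (dt_root P)}"
          using hatt_good[of \<delta> d \<omega> t'] assms(1,2) t' by (simp add: d_def)
      qed
      have evs: "{\<omega>. root_attr (hatt \<delta> \<omega> t) = Some (dt_root P)} \<in> sets ?M"
        unfolding hatt_def by (rule meas_list)
      have "measure ?M (\<Union>x. B x) \<le> (\<Sum>x\<in>UNIV. measure ?M (B x))"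
        by (rule measure_UNION_le) (auto simp: Bs)
      also have "\<dots> \<le> (\<Sum>x\<in>(UNIV::('a, 'v, 'c) example set). 2 * exp (- 2 * real t * \<eta>\<^sup>2))"
        unfolding B_def by (intro sum_mono hoeff) (use t' \<eta>pos in auto)
      also have "\<dots> = (2 * real CARD(('a, 'v, 'c) example)) * exp (- 2 * real t * \<eta>\<^sup>2)" by simp
      finally have ub: "measure ?M (\<Union>x. B x) \<le> (2 * real CARD(('a, 'v, 'c) example)) * exp (- 2 * real t * \<eta>\<^sup>2)" .
      have "measure ?M E = 1 - measure ?M (\<Union>x. B x)"
        unfolding Eeq by (rule prob_space.prob_compl[OF Mps]) (auto simp: Bs)
      then have "L t \<le> measure ?M E" using ub by (simp add: L_def)
      also have "\<dots> \<le> measure ?M {\<omega>. root_attr (hatt \<delta> \<omega> t) = Some (dt_root P)}"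
        by (rule finite_measure.finite_measure_mono[OF prob_space.finite_measure[OF Mps] sub evs])
      finally show ?case .
    qed
  qed
  have upper: "eventually (\<lambda>t. measure ?M {\<omega>. root_attr (hatt \<delta> \<omega> t) = Some (dt_root P)} \<le> 1) sequentially"
    using prob_space.prob_le_1[OF Mps] by simp
  show ?thesis by (rule tendsto_sandwich[OF lower upper L tendsto_const])
qed

end
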